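(* Let $w_0\to w_1\to\dots\to w_t$ be a reduced computation (as defined in the context). If $|w_0|_{\mathcal{A}}<|w_1|_{\mathcal{A}}$, then $|w_{i-1}|_{\mathcal{A}}\le|w_i|_{\mathcal{A}}$ for all $1\le i\le t$.
   Context: Let $\mathcal{A}$ be a finite non-empty alphabet, $\mathcal{A}_1=\{a_1:a\in\mathcal{A}\}$ a disjoint copy of $\mathcal{A}$, and $\mathcal{B}=\{b_1,b_2\}$; let $F=F(\mathcal{A}_1\sqcup\mathcal{B})$ be the free group, whose elements are identified with reduced words. Let $D=4|\mathcal{A}|(|\mathcal{A}|+2)$, fix a bijection $\eta:(\mathcal{A}\sqcup\mathcal{B})\times\mathcal{A}\to\{1,\dots,D/4\}$, and for $y\in\mathcal{A}\sqcup\mathcal{B}$, $a\in\mathcal{A}$, with $k=\eta(y,a)$, put $v(y,a)=b_1^k(b_2b_1)^{D-2k}b_2^k$. For $y\in\mathcal{A}\sqcup\mathcal{B}$ let $\psi_y$ be the automorphism of $F$ fixing $b_1,b_2$ and sending $a_1\mapsto v(y,a)a_1$ for each $a\in\mathcal{A}$; let $u_y=b_i^{-1}$ if $y=b_i$ and $u_y=a_1^{-1}$ if $y=a\in\mathcal{A}$. For each $y$ there are two operations ("rules") $\theta_y,\theta_y^{-1}$ on $F$: $w\cdot\theta_y=\psi_y(w)u_y$ and $w\cdot\theta_y^{-1}=\psi_y^{-1}(wu_y^{-1})$ (products freely reduced); these are mutually inverse. A computation is a sequence $w_0,\dots,w_t\in F$ with $w_i=w_{i-1}\cdot\theta_{y_i}^{\varepsilon_i}$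 for some $y_i\in\mathcal{A}\sqcup\mathcal{B}$, $\varepsilon_i\in\{\pm1\}$; its history is the word $\theta_{y_1}^{\varepsilon_1}\cdots\theta_{y_t}^{\varepsilon_t}$, and the computation is reduced if this word is freely reduced (no consecutive $\theta_y^{\varepsilon}\theta_y^{-\varepsilon}$). (This describes computations of the machine $\mathbf{M}_1^{\mathcal{A}}$ in the base $Q_0Q_1$, with configuration $q_0wq_1$ identified with $w$.) For $w\in F$, $|w|_{\mathcal{A}}$ is the number of letters of $w$ from $\mathcal{A}_1^{\pm1}$. *)

theory Defs
  imports Main
begin

text \<open>Generators of F = F(A_1 \<union> B): a copy a_1 of each letter a of the alphabet 'a,
  plus b_1, b_2.  The same datatype also serves as the index set A \<union> B of the rules
  (the letter a \<in> A being identified with the constructor GA a).\<close>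
datatype 'a gen = GA 'a | GB1 | GB2

text \<open>A letter is a generator with an exponent flag: (g, False) = g, (g, True) = g^-1.\<close>
type_synonym 'a letter = "'a gen \<times> bool"

definition inv_letter :: "'a letter \<Rightarrow> 'a letter" where
  "inv_letter x = (fst x, \<not> snd x)"

fun red :: "'a letter list \<Rightarrow> 'a letter list" where
  "red [] = []"
| "red (x # xs) = (case red xs of [] \<Rightarrow> [x]
                     | y # ys \<Rightarrow> (if y = inv_letter x then ys else x # y # ys))"

definition reduced :: "'a letter list \<Rightarrow> bool" where
  "reduced w \<longleftrightarrow> (\<forall>i. Suc i < length w \<longrightarrow> w ! Suc i \<noteq> inv_letter (w ! i))"

definition fmult :: "'a letter list \<Rightarrow> 'a letter list \<Rightarrow> 'a letter list" where
  "fmult w v = red (w @ v)"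

definition finv :: "'a letter list \<Rightarrow> 'a letter list" where
  "finv w = rev (map inv_letter w)"

definition hom_ext :: "('a gen \<Rightarrow> 'a letter list) \<Rightarrow> 'a letter list \<Rightarrow> 'a letter list" where
  "hom_ext f w = red (concat (map (\<lambda>(g, e). if e then finv (f g) else f g) w))"

definition Dconst :: "'a::finite itself \<Rightarrow> nat" where
  "Dconst (_ :: 'a itself) = 4 * card (UNIV :: 'a set) * (card (UNIV :: 'a set) + 2)"

definition vword :: "('a::finite gen \<times> 'a \<Rightarrow> nat) \<Rightarrow> 'a gen \<Rightarrow> 'a \<Rightarrow> 'a letter list" where
  "vword eta y a = (let k = eta (y, a); D = Dconst TYPE('a) in
      replicate k (GB1, False) @ concat (replicate (D - 2 * k) [(GB2, False), (GB1, False)])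
      @ replicate k (GB2, False))"

definition psi :: "('a::finite gen \<times> 'a \<Rightarrow> nat) \<Rightarrow> 'a gen \<Rightarrow> 'a letter list \<Rightarrow> 'a letter list" where
  "psi eta y = hom_ext (\<lambda>g. case g of GA a \<Rightarrow> vword eta y a @ [(GA a, False)] | _ \<Rightarrow> [(g, False)])"

text \<open>psi_y^-1: fixes b_1, b_2 and a_1 \<mapsto> v(y,a)^-1 a_1 (v(y,a) is a word in b_1,b_2,
  which psi_y fixes, so this is the inverse automorphism).\<close>
definition psi_inv :: "('a::finite gen \<times> 'a \<Rightarrow> nat) \<Rightarrow> 'a gen \<Rightarrow> 'a letter list \<Rightarrow> 'a letter list" where
  "psi_inv eta y = hom_ext (\<lambda>g. case g of GA a \<Rightarrow> red (finv (vword eta y a) @ [(GA a, False)])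
                                  | _ \<Rightarrow> [(g, False)])"

definition uword :: "'a gen \<Rightarrow> 'a letter list" where
  "uword y = [(y, True)]"

text \<open>Rule application: (y, True) is theta_y, (y, False) is theta_y^-1.\<close>
definition apply_rule :: "('a::finite gen \<times> 'a \<Rightarrow> nat) \<Rightarrow> 'a gen \<times> bool \<Rightarrow> 'a letter list \<Rightarrow> 'a letter list" where
  "apply_rule eta r w = (if snd r then fmult (psi eta (fst r) w) (uword (fst r))
                         else psi_inv eta (fst r) (fmult w (finv (uword (fst r)))))"

definition is_computation :: "('a::finite gen \<times> 'a \<Rightarrow> nat) \<Rightarrow> 'a letter list list \<Rightarrow> ('a gen \<times> bool) list \<Rightarrow> bool" where
  "is_computation eta ws hs \<longleftrightarrow> length ws = Suc (length hs) \<and> reduced (ws ! 0) \<and>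
     (\<forall>i < length hs. ws ! Suc i = apply_rule eta (hs ! i) (ws ! i))"

definition reduced_history :: "('a gen \<times> bool) list \<Rightarrow> bool" where
  "reduced_history hs \<longleftrightarrow> (\<forall>i. Suc i < length hs \<longrightarrow> hs ! Suc i \<noteq> (fst (hs ! i), \<not> snd (hs ! i)))"

definition cntA :: "'a letter list \<Rightarrow> nat" where
  "cntA w = length (filter (\<lambda>x. case fst x of GA _ \<Rightarrow> True | _ \<Rightarrow> False) w)"

end

theory Submission
  imports Defs
begin


definition cr :: "'a letter \<Rightarrow> 'a letter list \<Rightarrow> 'a letter list" where
  "cr x ys = (case ys of [] \<Rightarrow> [x] | y # ys' \<Rightarrow> (if y = inv_letter x then ys' else x # y # ys'))"

lemma red_Cons: "red (x # xs) = cr x (red xs)"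
  by (simp add: cr_def)

declare red.simps(2)[simp del]

lemma inv_inv[simp]: "inv_letter (inv_letter x) = x"
  by (simp add: inv_letter_def)

lemma inv_neq[simp]: "inv_letter x \<noteq> x" "x \<noteq> inv_letter x"
  by (auto simp: inv_letter_def prod_eq_iff)

lemma reduced_Nil[simp]: "reduced []" by (simp add: reduced_def)
lemma reduced_single[simp]: "reduced [x]" by (simp add: reduced_def)

lemma reduced_Cons: "reduced (x # ys) \<longleftrightarrow> reduced ys \<and> (ys \<noteq> [] \<longrightarrow> hd ys \<noteq> inv_letter x)"
proof
  assume r: "reduced (x # ys)"
  have "reduced ys" unfolding reduced_def
  proof (intro allI impI)
    fix i assume "Suc i < length ys"
    with r[unfolded reduced_def, rule_format, of "Suc i"] show "ys ! Suc i \<noteq> inv_letter (ys ! i)" by simp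
  qed
  moreover have "ys \<noteq> [] \<longrightarrow> hd ys \<noteq> inv_letter x"
    using r[unfolded reduced_def, rule_format, of 0] by (cases ys) auto
  ultimately show "reduced ys \<and> (ys \<noteq> [] \<longrightarrow> hd ys \<noteq> inv_letter x)" by blast
next
  assume a: "reduced ys \<and> (ys \<noteq> [] \<longrightarrow> hd ys \<noteq> inv_letter x)"
  show "reduced (x # ys)" unfolding reduced_def
  proof (intro allI impI)
    fix i assume i: "Suc i < length (x # ys)"
    show "(x # ys) ! Suc i \<noteq> inv_letter ((x # ys) ! i)"
    proof (cases i)
      case 0 with a i show ?thesis by (cases ys) auto
    next
      case (Suc i') with a i show ?thesis by (auto simp: reduced_def)
    qed
  qed
qed

lemma reduced_Cons2[simp]: "reduced (x # y # ys) \<longleftrightarrow> y \<noteq> inv_letter x \<and> reduced (y # ys)"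
  by (subst reduced_Cons) auto

lemma reduced_append: "reduced (a @ b) \<longleftrightarrow> reduced a \<and> reduced b \<and> (a \<noteq> [] \<and> b \<noteq> [] \<longrightarrow> hd b \<noteq> inv_letter (last a))"
proof (induction a)
  case Nil then show ?case by simp
next
  case (Cons x a)
  show ?case
  proof (cases a)
    case Nil then show ?thesis by (simp add: reduced_Cons)
  next
    case (Cons y a') then show ?thesis using Cons.IH by (auto simp: reduced_Cons)
  qed
qed

lemma reduced_cr: "reduced ys \<Longrightarrow> reduced (cr x ys)"
  by (auto simp: cr_def reduced_Cons split: list.splits)

lemma reduced_red[simp]: "reduced (red w)"
  by (induction w) (auto simp: red_Cons reduced_cr)

lemma red_reduced: "reduced w \<Longrightarrow> red w = w"
  by (induction w) (auto simp: red_Cons cr_def reduced_Cons split: list.splits)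

lemma red_red[simp]: "red (red w) = red w"
  by (simp add: red_reduced)

lemma cr_cancel: "reduced q \<Longrightarrow> cr x (cr (inv_letter x) q) = q"
  by (cases q) (auto simp: cr_def reduced_Cons split: list.splits)

lemma red_append_red2: "red (u @ red v) = red (u @ v)"
  by (induction u) (auto simp: red_Cons)

lemma red_cr_append: "red (cr x p @ z) = cr x (red (p @ z))"
proof (cases p)
  case Nil then show ?thesis by (simp add: cr_def red_Cons)
next
  case (Cons y p')
  show ?thesis
  proof (cases "y = inv_letter x")
    case True
    then have "cr x (red (p @ z)) = cr x (cr (inv_letter x) (red (p' @ z)))"
      using Cons by (simp add: red_Cons)
    also have "\<dots> = red (p' @ z)" by (rule cr_cancel) simp
    finally show ?thesis using Cons True by (simp add: cr_def)
  next
    case False then show ?thesis using Cons by (simp add: cr_def red_Cons)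
  qed
qed

lemma red_append_red1: "red (red u @ v) = red (u @ v)"
proof (induction u)
  case Nil then show ?case by (simp add: red_reduced)
next
  case (Cons x u)
  have "red (red (x # u) @ v) = red (cr x (red u) @ v)" by (simp add: red_Cons)
  also have "\<dots> = cr x (red (red u @ v))" by (rule red_cr_append)
  also have "\<dots> = red ((x # u) @ v)" using Cons by (simp add: red_Cons)
  finally show ?case .
qed

lemma red_mid: "red (u @ red v @ w) = red (u @ v @ w)"
  by (metis append_assoc red_append_red1 red_append_red2)

lemma finv_append[simp]: "finv (a @ b) = finv b @ finv a"
  by (simp add: finv_def)
lemma finv_Nil[simp]: "finv [] = []" by (simp add: finv_def)
lemma finv_Cons[simp]: "finv (x # a) = finv a @ [inv_letter x]" by (simp add: finv_def)
lemma finv_finv[simp]: "finv (finv a) = a" by (induction a) auto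
lemma length_finv[simp]: "length (finv a) = length a" by (simp add: finv_def)

lemma red_cancel: "red (u @ finv u @ s) = red s"
proof (induction u arbitrary: s)
  case Nil then show ?case by simp
next
  case (Cons x u)
  have "red ((x # u) @ finv (x # u) @ s) = cr x (red (u @ finv u @ (inv_letter x # s)))"
    by (simp add: red_Cons)
  also have "\<dots> = cr x (cr (inv_letter x) (red s))" using Cons by (simp add: red_Cons)
  also have "\<dots> = red s" by (rule cr_cancel) simp
  finally show ?case .
qed

lemma red_cancel': "red (s @ u @ finv u) = red s"
proof -
  have "red (s @ u @ finv u) = red (s @ red (u @ finv u @ []))" by (simp add: red_append_red2)
  also have "\<dots> = red s" by (simp only: red_cancel) simp
  finally show ?thesis .
qed

lemma finv_eq_Nil[simp]: "finv a = [] \<longleftrightarrow> a = []" by (simp add: finv_def)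

lemma last_finv: "a \<noteq> [] \<Longrightarrow> last (finv a) = inv_letter (hd a)"
  by (cases a) auto

lemma hd_finv: "a \<noteq> [] \<Longrightarrow> hd (finv a) = inv_letter (last a)"
  by (induction a) (auto simp: hd_append)

lemma inv_letter_eq_iff[simp]: "inv_letter x = inv_letter y \<longleftrightarrow> x = y"
  by (metis inv_inv)

lemma reduced_finv: "reduced a \<Longrightarrow> reduced (finv a)"
proof (induction a)
  case Nil then show ?case by simp
next
  case (Cons x a)
  then show ?case by (auto simp: reduced_append reduced_Cons last_finv)
qed

lemma length_red: "length (red w) \<le> length w"
  by (induction w) (auto simp: red_Cons cr_def split: list.splits)

lemma set_red: "set (red w) \<subseteq> set w"
  by (induction w) (auto simp: red_Cons cr_def split: list.splits)

lemma red_eq_Nil_inv: "red (L @ R) = [] \<Longrightarrow> red L = red (finv R)"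
proof -
  assume a: "red (L @ R) = []"
  have "red L = red (L @ R @ finv R)" by (simp add: red_cancel')
  also have "\<dots> = red (red (L @ R) @ finv R)" by (metis append_assoc red_append_red1)
  finally show ?thesis using a by simp
qed



definition isA :: "'a letter \<Rightarrow> bool" where
  "isA x = (case fst x of GA _ \<Rightarrow> True | _ \<Rightarrow> False)"

definition bonly :: "'a letter list \<Rightarrow> bool" where
  "bonly t = (\<forall>x\<in>set t. \<not> isA x)"

lemma isA_simps[simp]: "isA (GA a, e)" "\<not> isA (GB1, e)" "\<not> isA (GB2, e)"
  by (auto simp: isA_def)

lemma isA_inv[simp]: "isA (inv_letter x) = isA x"
  by (simp add: isA_def inv_letter_def)

lemma cntA_Nil[simp]: "cntA [] = 0" by (simp add: cntA_def)
lemma cntA_append[simp]: "cntA (a @ b) = cntA a + cntA b" by (simp add: cntA_def)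
lemma cntA_Cons: "cntA (x # a) = (if isA x then Suc (cntA a) else cntA a)"
  by (simp add: cntA_def isA_def)
lemma cntA_single[simp]: "cntA [x] = (if isA x then 1 else 0)"
  by (simp add: cntA_Cons)
lemma cntA_bonly: "bonly t \<Longrightarrow> cntA t = 0"
  by (induction t) (auto simp: cntA_Cons bonly_def)

lemma bonly_append[simp]: "bonly (a @ b) \<longleftrightarrow> bonly a \<and> bonly b" by (auto simp: bonly_def)
lemma bonly_Nil[simp]: "bonly []" by (simp add: bonly_def)
lemma bonly_Cons[simp]: "bonly (x # a) \<longleftrightarrow> \<not> isA x \<and> bonly a" by (auto simp: bonly_def)
lemma bonly_red: "bonly t \<Longrightarrow> bonly (red t)"
  using set_red by (auto simp: bonly_def)
lemma bonly_finv: "bonly t \<Longrightarrow> bonly (finv t)"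
  by (auto simp: bonly_def finv_def)

lemma isA_hd: "bonly s \<Longrightarrow> s \<noteq> [] \<Longrightarrow> \<not> isA (hd s)"
  by (cases s) auto
lemma isA_last: "bonly s \<Longrightarrow> s \<noteq> [] \<Longrightarrow> \<not> isA (last s)"
  by (auto simp: bonly_def)

lemma reduced_decomp: "reduced (W @ [x]) \<Longrightarrow> isA x \<Longrightarrow> bonly s \<Longrightarrow> reduced s \<Longrightarrow> reduced (W @ [x] @ s)"
  using reduced_append[of "W @ [x]" s] isA_hd[of s]
  by (metis append_assoc isA_inv last_snoc snoc_eq_iff_butlast)

lemma red_decomp: "reduced (W @ [x]) \<Longrightarrow> isA x \<Longrightarrow> bonly s \<Longrightarrow> red (W @ [x] @ s) = W @ [x] @ red s"
proof -
  assume a: "reduced (W @ [x])" "isA x" "bonly s"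
  have "red (W @ [x] @ s) = red ((W @ [x]) @ red s)" using red_append_red2[of "W @ [x]" s] by simp
  also have "\<dots> = W @ [x] @ red s"
    using reduced_decomp[OF a(1,2) bonly_red[OF a(3)]] by (simp add: red_reduced)
  finally show ?thesis .
qed

lemma decomp_exists: "\<not> bonly w \<Longrightarrow> \<exists>W x t. w = W @ [x] @ t \<and> isA x \<and> bonly t"
proof (induction w rule: rev_induct)
  case Nil then show ?case by simp
next
  case (snoc z w)
  show ?case
  proof (cases "isA z")
    case True then show ?thesis by (intro exI[of _ w] exI[of _ z] exI[of _ "[]"]) simp
  next
    case False
    then have "\<not> bonly w" using snoc.prems by simp
    then obtain W x t where "w = W @ [x] @ t" "isA x" "bonly t" using snoc.IH by blast
    then show ?thesis using False by (intro exI[of _ W] exI[of _ x] exI[of _ "t @ [z]"]) simp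
  qed
qed

definition F :: "('a \<Rightarrow> 'a letter list) \<Rightarrow> 'a gen \<Rightarrow> 'a letter list" where
  "F q = (\<lambda>g. case g of GA a \<Rightarrow> q a @ [(GA a, False)] | _ \<Rightarrow> [(g, False)])"

definition img :: "('a gen \<Rightarrow> 'a letter list) \<Rightarrow> 'a letter \<Rightarrow> 'a letter list" where
  "img f = (\<lambda>(g, e). if e then finv (f g) else f g)"

lemma hom_ext_snoc: "hom_ext f (w @ [z]) = red (hom_ext f w @ img f z)"
  by (simp add: hom_ext_def img_def red_append_red1)

lemma hom_ext_Nil[simp]: "hom_ext f [] = []" by (simp add: hom_ext_def)

lemma img_b: "\<not> isA z \<Longrightarrow> img (F q) z = [z]"
  by (cases z; rename_tac g e; case_tac g) (auto simp: img_def F_def inv_letter_def)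

lemma img_A_pos: "img (F q) (GA c, False) = q c @ [(GA c, False)]"
  by (simp add: img_def F_def)
lemma img_A_neg: "img (F q) (GA c, True) = [(GA c, True)] @ finv (q c)"
  by (simp add: img_def F_def inv_letter_def)

lemma conj_lemma: "red (finv q @ t @ q) = [] \<Longrightarrow> reduced t \<Longrightarrow> t = []"
proof -
  assume a: "red (finv q @ t @ q) = []" "reduced t"
  have "red t = red (q @ finv q @ (t @ q) @ finv q)"
    using red_cancel red_cancel' by (metis append_assoc)
  also have "\<dots> = red (q @ red (finv q @ t @ q) @ finv q)"
    by (simp add: red_mid)
  also have "\<dots> = red (q @ finv q @ [])" using a by simp
  also have "\<dots> = []" by (simp only: red_cancel) simp
  finally show ?thesis using a by (simp add: red_reduced)
qed

lemma reduced_prefix: "reduced (a @ b) \<Longrightarrow> reduced a" by (simp add: reduced_append)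
lemma reduced_suffix: "reduced (a @ b) \<Longrightarrow> reduced b" by (simp add: reduced_append)

lemma H:
  assumes q: "\<And>a. reduced (q a) \<and> bonly (q a)" and r: "reduced w"
  shows "(bonly w \<longrightarrow> hom_ext (F q) w = w) \<and>
    (\<forall>W a s t. w = W @ [(GA a, s)] @ t \<and> bonly t \<longrightarrow>
      (\<exists>W'. hom_ext (F q) w = W' @ [(GA a, s)] @ red ((if s then finv (q a) else []) @ t) \<and> cntA W' = cntA W))"
  using r
proof (induction w rule: rev_induct)
  case Nil then show ?case by simp
next
  case (snoc z w0)
  have r0: "reduced w0" using snoc.prems reduced_prefix by blast
  note IH = snoc.IH[OF r0]
  have hs: "hom_ext (F q) (w0 @ [z]) = red (hom_ext (F q) w0 @ img (F q) z)" by (rule hom_ext_snoc)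
  have reds: "reduced (hom_ext (F q) w0)" by (simp add: hom_ext_def)
  show ?case
  proof (cases "isA z")
    case False
    have P1: "bonly (w0 @ [z]) \<longrightarrow> hom_ext (F q) (w0 @ [z]) = w0 @ [z]"
      using IH False snoc.prems by (simp add: hs img_b red_reduced)
    have P2: "\<exists>W'. hom_ext (F q) (w0 @ [z]) = W' @ [(GA a, s)] @ red ((if s then finv (q a) else []) @ t) \<and> cntA W' = cntA W"
      if d: "w0 @ [z] = W @ [(GA a, s)] @ t" "bonly t" for W a s t
    proof -
      have "t \<noteq> []" using d False by auto
      then obtain t0 where t0: "t = t0 @ [z]" using d by (metis append_assoc append_butlast_last_id last_appendR last_snoc)
      then have "w0 = W @ [(GA a, s)] @ t0" "bonly t0" using d by auto
      then obtain W' where W': "hom_ext (F q) w0 = W' @ [(GA a, s)] @ red ((if s then finv (q a) else []) @ t0)" "cntA W' = cntA W"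
        using IH by blast
      have rW: "reduced (W' @ [(GA a, s)])" using reds W'(1) by (metis append_assoc reduced_prefix)
      have "hom_ext (F q) (w0 @ [z]) = red (W' @ [(GA a, s)] @ (red ((if s then finv (q a) else []) @ t0) @ [z]))"
        using hs W'(1) False by (simp add: img_b)
      also have "\<dots> = W' @ [(GA a, s)] @ red (red ((if s then finv (q a) else []) @ t0) @ [z])"
        by (rule red_decomp[OF rW]) (use q False d t0 in \<open>auto intro!: bonly_red bonly_finv\<close>)
      also have "\<dots> = W' @ [(GA a, s)] @ red ((if s then finv (q a) else []) @ t)"
        by (simp add: red_append_red1 t0)
      finally show ?thesis using W'(2) by blast
    qed
    show ?thesis using P1 P2 by blast
  next
    case True
    then obtain c e where z: "z = (GA c, e)" by (cases z; rename_tac g e; case_tac g) auto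
    have P2: "\<exists>W'. hom_ext (F q) (w0 @ [z]) = W' @ [(GA c, e)] @ red ((if e then finv (q c) else []))
          \<and> cntA W' = cntA w0"
    proof (cases "bonly w0")
      case True
      then have h0: "hom_ext (F q) w0 = w0" using IH by blast
      show ?thesis
      proof (cases e)
        case False
        have "hom_ext (F q) (w0 @ [z]) = red ((w0 @ q c) @ [(GA c, False)])"
          using hs h0 z False by (simp add: img_A_pos)
        also have "\<dots> = red (w0 @ q c) @ [(GA c, False)]"
        proof -
          have "reduced (red (w0 @ q c) @ [(GA c, False)])"
          proof -
            have b: "bonly (red (w0 @ q c))" using q True by (auto intro!: bonly_red)
            have "red (w0 @ q c) \<noteq> [] \<Longrightarrow> (GA c, False) \<noteq> inv_letter (last (red (w0 @ q c)))"
              using isA_last[OF b] by (metis isA_inv isA_simps(1))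
            then show ?thesis by (subst reduced_append) auto
          qed
          then show ?thesis by (metis red_append_red1 red_reduced)
        qed
        finally show ?thesis using False z q True
          by (intro exI[of _ "red (w0 @ q c)"]) (auto simp: cntA_bonly bonly_red)
      next
        case e: True
        have "hom_ext (F q) (w0 @ [z]) = red (w0 @ [(GA c, True)] @ finv (q c))"
          using hs h0 z e by (simp add: img_A_neg)
        also have "\<dots> = w0 @ [(GA c, True)] @ finv (q c)"
        proof -
          have "reduced (w0 @ [(GA c, True)])"
            using isA_last[of w0] True r0
            by (subst reduced_append) (auto, metis isA_inv isA_simps(1))
          then show ?thesis using red_decomp[of w0 "(GA c, True)" "finv (q c)"] q
            by (simp add: bonly_finv red_reduced reduced_finv)
        qed
        finally show ?thesis using e q
          by (intro exI[of _ w0]) (simp add: red_reduced reduced_finv)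
      qed
    next
      case False
      then obtain W0 x0 t0 where d0: "w0 = W0 @ [x0] @ t0" "isA x0" "bonly t0"
        using decomp_exists by blast
      then obtain a0 s0 where x0: "x0 = (GA a0, s0)" by (cases x0; rename_tac g e; case_tac g) auto
      obtain W0' where W0': "hom_ext (F q) w0 = W0' @ [x0] @ red ((if s0 then finv (q a0) else []) @ t0)"
          "cntA W0' = cntA W0"
        using IH d0 x0 by blast
      define T0 where "T0 = red ((if s0 then finv (q a0) else []) @ t0)"
      have bT0: "bonly T0" unfolding T0_def using q d0 by (auto intro!: bonly_red bonly_finv)
      have rW: "reduced (W0' @ [x0])" using reds W0'(1) by (metis append_assoc reduced_prefix)
      have rt0: "reduced t0" using r0 d0 by (metis reduced_suffix)
      have cw0: "cntA w0 = cntA W0 + 1" using d0 by (simp add: cntA_bonly cntA_Cons)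
      have rz: "reduced (w0 @ [z])" using snoc.prems .
      show ?thesis
      proof (cases e)
        case False
        define S where "S = red (T0 @ q c)"
        have bS: "bonly S" unfolding S_def using bT0 q by (auto intro!: bonly_red)
        have "hom_ext (F q) (w0 @ [z]) = red (W0' @ [x0] @ T0 @ q c @ [(GA c, False)])"
          using hs W0'(1) z False by (simp add: img_A_pos T0_def)
        also have "\<dots> = red (W0' @ [x0] @ S @ [(GA c, False)])"
          unfolding S_def using red_mid[of "W0' @ [x0]" "T0 @ q c" "[(GA c, False)]"] by simp
        also have "\<dots> = W0' @ [x0] @ S @ [(GA c, False)]"
        proof -
          have nc: "S = [] \<longrightarrow> x0 \<noteq> (GA c, True)"
          proof
            assume S0: "S = []"
            show "x0 \<noteq> (GA c, True)"
            proof
              assume xx: "x0 = (GA c, True)"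
              then have "red (finv (q c) @ t0 @ q c) = []" using S0 x0
                unfolding S_def T0_def by (simp add: red_append_red1)
              then have "t0 = []" using conj_lemma rt0 by blast
              then have "w0 @ [z] = W0 @ [(GA c, True), (GA c, False)]" using d0 xx z False by simp
              then show False using rz by (simp add: reduced_append inv_letter_def)
            qed
          qed
          have "reduced ((W0' @ [x0] @ S) @ [(GA c, False)])"
          proof (subst reduced_append, intro conjI)
            show "reduced (W0' @ [x0] @ S)"
              using reduced_decomp[OF rW d0(2) bS] by (simp add: S_def)
            show "(W0' @ [x0] @ S \<noteq> [] \<and> [(GA c, False)] \<noteq> [] \<longrightarrow> hd [(GA c, False)] \<noteq> inv_letter (last (W0' @ [x0] @ S)))"
              using nc isA_last[OF bS] x0 by (cases "S = []") (auto simp: inv_letter_def isA_def split: gen.splits)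
          qed simp
          then show ?thesis by (simp add: red_reduced)
        qed
        finally show ?thesis using z False cw0 W0'(2) d0(2) bS
          by (intro exI[of _ "W0' @ [x0] @ S"]) (simp add: cntA_bonly cntA_Cons)
      next
        case e: True
        have "hom_ext (F q) (w0 @ [z]) = red (W0' @ [x0] @ T0 @ [(GA c, True)] @ finv (q c))"
          using hs W0'(1) z e by (simp add: img_A_neg T0_def)
        also have "\<dots> = W0' @ [x0] @ T0 @ [(GA c, True)] @ finv (q c)"
        proof -
          have nc: "T0 = [] \<longrightarrow> x0 \<noteq> (GA c, False)"
          proof
            assume S0: "T0 = []"
            show "x0 \<noteq> (GA c, False)"
            proof
              assume xx: "x0 = (GA c, False)"
              then have "t0 = []" using S0 x0 rt0 unfolding T0_def by (simp add: red_reduced)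
              then have "w0 @ [z] = W0 @ [(GA c, False), (GA c, True)]" using d0 xx z e by simp
              then show False using rz by (simp add: reduced_append inv_letter_def)
            qed
          qed
          have r1: "reduced ((W0' @ [x0] @ T0) @ [(GA c, True)])"
          proof (subst reduced_append, intro conjI)
            show "reduced (W0' @ [x0] @ T0)"
              using reduced_decomp[OF rW d0(2) bT0] by (simp add: T0_def)
            show "(W0' @ [x0] @ T0 \<noteq> [] \<and> [(GA c, True)] \<noteq> [] \<longrightarrow> hd [(GA c, True)] \<noteq> inv_letter (last (W0' @ [x0] @ T0)))"
              using nc isA_last[OF bT0] x0 by (cases "T0 = []") (auto simp: inv_letter_def isA_def split: gen.splits)
          qed simp
          have "reduced ((W0' @ [x0] @ T0) @ [(GA c, True)] @ finv (q c))"
            using reduced_decomp[OF r1, of "finv (q c)"] q by (simp add: bonly_finv reduced_finv)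
          then show ?thesis by (simp add: red_reduced)
        qed
        finally show ?thesis using z e cw0 W0'(2) d0(2) bT0 q
          by (intro exI[of _ "W0' @ [x0] @ T0"]) (simp add: cntA_bonly cntA_Cons red_reduced reduced_finv)
      qed
    qed
    have P2': "\<exists>W'. hom_ext (F q) (w0 @ [z]) = W' @ [(GA a, s)] @ red ((if s then finv (q a) else []) @ t) \<and> cntA W' = cntA W"
      if d: "w0 @ [z] = W @ [(GA a, s)] @ t" "bonly t" for W a s t
    proof -
      have "t = []" using d True by (metis append_is_Nil_conv bonly_Cons isA_last last_appendR last_snoc not_Cons_self2 snoc_eq_iff_butlast)
      then have "W = w0" "z = (GA a, s)" using d by auto
      then show ?thesis using P2 z \<open>t = []\<close> by (cases s) auto
    qed
    have P1: "\<not> bonly (w0 @ [z])" using True by simp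
    show ?thesis using P1 P2' by blast
  qed
qed



lemma reduced_pos: "(\<forall>x\<in>set w. snd x = False) \<Longrightarrow> reduced w"
  unfolding reduced_def
proof (intro allI impI)
  fix i assume a: "\<forall>x\<in>set w. snd x = False" and i: "Suc i < length w"
  have "snd (w ! Suc i) = False" "snd (w ! i) = False" using a i by auto
  then show "w ! Suc i \<noteq> inv_letter (w ! i)" by (auto simp: inv_letter_def)
qed

lemma set_vword: "set (vword eta y a) \<subseteq> {(GB1, False), (GB2, False)}"
  by (auto simp: vword_def Let_def)

lemma vword_good: "reduced (vword eta y a) \<and> bonly (vword eta y a)"
  using set_vword[of eta y a] by (auto simp: bonly_def intro!: reduced_pos)

lemma vword_inv_good: "reduced (finv (vword eta y a)) \<and> bonly (finv (vword eta y a))"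
  using vword_good by (auto intro: reduced_finv bonly_finv)

lemma psi_F: "psi eta y = hom_ext (F (vword eta y))"
  by (simp add: psi_def F_def)

lemma red_snoc_A: "reduced p \<Longrightarrow> bonly p \<Longrightarrow> isA x \<Longrightarrow> red (p @ [x]) = p @ [x]"
  apply (rule red_reduced)
  apply (subst reduced_append)
  using isA_last[of p] by (metis isA_inv list.sel(1) reduced_single)

lemma psi_inv_F: "psi_inv eta y = hom_ext (F (\<lambda>a. finv (vword eta y a)))"
proof -
  have "(\<lambda>g. case g of GA a \<Rightarrow> red (finv (vword eta y a) @ [(GA a, False)]) | _ \<Rightarrow> [(g, False)])
       = F (\<lambda>a. finv (vword eta y a))"
    by (rule ext, rename_tac g, case_tac g) (auto simp: F_def red_snoc_A vword_inv_good)
  then show ?thesis by (simp add: psi_inv_def)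
qed

lemma H1:
  assumes q: "\<And>a. reduced (q a) \<and> bonly (q a)" and r: "reduced w" and b: "bonly w"
  shows "hom_ext (F q) w = w"
  using conjunct1[OF H[OF q r]] b by simp

lemma H2:
  assumes q: "\<And>a. reduced (q a) \<and> bonly (q a)" and r: "reduced (W @ [(GA a, s)] @ t)" and b: "bonly t"
  shows "\<exists>W'. hom_ext (F q) (W @ [(GA a, s)] @ t) = W' @ [(GA a, s)] @ red ((if s then finv (q a) else []) @ t) \<and> cntA W' = cntA W"
proof -
  have h: "\<forall>W0 a0 s0 t0. W @ [(GA a, s)] @ t = W0 @ [(GA a0, s0)] @ t0 \<and> bonly t0 \<longrightarrow>
      (\<exists>W'. hom_ext (F q) (W @ [(GA a, s)] @ t) = W' @ [(GA a0, s0)] @ red ((if s0 then finv (q a0) else []) @ t0) \<and> cntA W' = cntA W0)"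
    using conjunct2[OF H[OF q r]] .
  show ?thesis by (rule h[rule_format]) (simp add: b)
qed

lemma cnt_hom:
  assumes q: "\<And>a. reduced (q a) \<and> bonly (q a)" and r: "reduced w"
  shows "cntA (hom_ext (F q) w) = cntA w"
proof (cases "bonly w")
  case True then show ?thesis using H1[OF q r] by simp
next
  case False
  then obtain W x t where d: "w = W @ [x] @ t" "isA x" "bonly t" using decomp_exists by blast
  then obtain a s where x: "x = (GA a, s)" by (cases x; rename_tac g e; case_tac g) auto
  obtain W' where "hom_ext (F q) w = W' @ [(GA a, s)] @ red ((if s then finv (q a) else []) @ t)" "cntA W' = cntA W"
    using H2[of q W a s t, OF q _ d(3)] r d x by auto
  moreover have "bonly (red ((if s then finv (q a) else []) @ t))" using q d by (auto intro!: bonly_red bonly_finv)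
  ultimately show ?thesis using d x by (simp add: cntA_bonly cntA_Cons)
qed

lemma reduced_apply_rule: "reduced (apply_rule eta r w)"
  by (simp add: apply_rule_def fmult_def psi_inv_def hom_ext_def)

lemma rule_A:
  assumes r: "reduced w"
  shows "(\<exists>W'. apply_rule eta (GA c, e) w = W' @ [(GA c, e)] \<and> cntA W' = cntA w) \<or>
         (\<exists>W. w = W @ [(GA c, \<not> e)] \<and> cntA (apply_rule eta (GA c, e) w) = cntA W)"
proof (cases e)
  case True
  have ar: "apply_rule eta (GA c, e) w = red (psi eta (GA c) w @ [(GA c, True)])"
    using True by (simp add: apply_rule_def fmult_def uword_def)
  show ?thesis
  proof (cases "bonly w")
    case b: True
    have "psi eta (GA c) w = w" using H1[of "vword eta (GA c)", OF vword_good r b] by (simp add: psi_F)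
    then have "apply_rule eta (GA c, e) w = w @ [(GA c, True)]" using ar r b by (simp add: red_snoc_A)
    then show ?thesis using True by (intro disjI1 exI[of _ w]) simp
  next
    case False
    then obtain W x t where d: "w = W @ [x] @ t" "isA x" "bonly t" using decomp_exists by blast
    then obtain a s where x: "x = (GA a, s)" by (cases x; rename_tac g e; case_tac g) auto
    define T where "T = red ((if s then finv (vword eta (GA c) a) else []) @ t)"
    obtain W' where W': "psi eta (GA c) w = W' @ [x] @ T" "cntA W' = cntA W"
      using H2[of "vword eta (GA c)" W a s t, OF vword_good _ d(3)] r d x by (auto simp: psi_F T_def)
    have bT: "bonly T" unfolding T_def using d vword_good[of eta "GA c" a] by (auto intro!: bonly_red bonly_finv)
    have rp: "reduced (W' @ [x] @ T)"
    proof -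
      have "reduced (psi eta (GA c) w)" by (simp add: psi_def hom_ext_def)
      then show ?thesis using W'(1) by simp
    qed
    have rt: "reduced t" using r d reduced_suffix by blast
    show ?thesis
    proof (cases "T = [] \<and> x = (GA c, False)")
      case c1: True
      then have "t = []" using x rt unfolding T_def by (cases s) (auto simp: red_reduced)
      then have w: "w = W @ [(GA c, False)]" using d c1 by simp
      have "apply_rule eta (GA c, e) w = red (W' @ ([x] @ finv [x] @ []))"
        using ar W' c1 by (simp add: inv_letter_def)
      also have "\<dots> = red (W' @ red ([x] @ finv [x] @ []))" by (simp only: red_append_red2)
      also have "\<dots> = W'" by (simp only: red_cancel) (use rp reduced_prefix[of W' "x # T"] in \<open>simp add: red_reduced\<close>)
      finally show ?thesis using w W'(2) True by auto
    next
      case c2: False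
      have "reduced ((W' @ [x] @ T) @ [(GA c, True)])"
      proof (subst reduced_append, intro conjI)
        show "W' @ [x] @ T \<noteq> [] \<and> [(GA c, True)] \<noteq> [] \<longrightarrow> hd [(GA c, True)] \<noteq> inv_letter (last (W' @ [x] @ T))"
          using c2 isA_last[OF bT] x by (cases "T = []") (auto simp: inv_letter_def isA_def split: gen.splits)
      qed (use rp in simp_all)
      then have "apply_rule eta (GA c, e) w = (W' @ [x] @ T) @ [(GA c, e)]"
        using ar W' True by (simp add: red_reduced)
      moreover have "cntA (W' @ [x] @ T) = cntA w" using W'(2) d bT by (simp add: cntA_bonly cntA_Cons)
      ultimately show ?thesis by auto
    qed
  qed
next
  case False
  have ar: "apply_rule eta (GA c, e) w = psi_inv eta (GA c) (red (w @ [(GA c, False)]))"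
    using False by (simp add: apply_rule_def fmult_def uword_def inv_letter_def)
  show ?thesis
  proof (cases "\<exists>W. w = W @ [(GA c, True)]")
    case True
    then obtain W where w: "w = W @ [(GA c, True)]" by blast
    have rW: "reduced W" using r w reduced_prefix by blast
    have "red (w @ [(GA c, False)]) = red (W @ ([(GA c, True)] @ finv [(GA c, True)] @ []))"
      using w by (simp add: inv_letter_def)
    also have "\<dots> = red (W @ red ([(GA c, True)] @ finv [(GA c, True)] @ []))"
      by (simp only: red_append_red2)
    also have "\<dots> = W" by (simp only: red_cancel) (simp add: red_reduced rW)
    finally have "apply_rule eta (GA c, e) w = psi_inv eta (GA c) W" using ar by simp
    then have "cntA (apply_rule eta (GA c, e) w) = cntA W"
      using cnt_hom[of "\<lambda>a. finv (vword eta (GA c) a)", OF vword_inv_good rW] by (simp add: psi_inv_F)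
    then show ?thesis using w False by auto
  next
    case nt: False
    have rwz: "reduced (w @ [(GA c, False)])"
    proof (subst reduced_append, intro conjI)
      show "w \<noteq> [] \<and> [(GA c, False)] \<noteq> [] \<longrightarrow> hd [(GA c, False)] \<noteq> inv_letter (last w)"
      proof
        assume "w \<noteq> [] \<and> [(GA c, False)] \<noteq> []"
        then have ww: "w = butlast w @ [last w]" by simp
        show "hd [(GA c, False)] \<noteq> inv_letter (last w)"
        proof
          assume "hd [(GA c, False)] = inv_letter (last w)"
          then have "last w = (GA c, True)" by (auto simp: inv_letter_def prod_eq_iff)
          then show False using nt ww by metis
        qed
      qed
    qed (use r in simp_all)
    then have "apply_rule eta (GA c, e) w = psi_inv eta (GA c) (w @ [(GA c, False)] @ [])"
      using ar by (simp add: red_reduced)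
    moreover obtain W' where "psi_inv eta (GA c) (w @ [(GA c, False)] @ []) = W' @ [(GA c, False)] @ red ([] @ [])"
      "cntA W' = cntA w"
      using H2[of "\<lambda>a. finv (vword eta (GA c) a)" w c False "[]", OF vword_inv_good _ bonly_Nil] rwz by (auto simp: psi_inv_F)
    ultimately show ?thesis using False by auto
  qed
qed

lemma rule_B:
  assumes y: "\<not> isA (y, e)" and r: "reduced (W @ [(GA a, s)] @ t)" and bt: "bonly t"
  shows "\<exists>W'. apply_rule eta (y, e) (W @ [(GA a, s)] @ t) =
     W' @ [(GA a, s)] @ red ((if s then (if e then finv (vword eta y a) else vword eta y a) else []) @ t @ [(y, e)])
     \<and> cntA W' = cntA W"
proof (cases e)
  case True
  define T where "T = red ((if s then finv (vword eta y a) else []) @ t)"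
  obtain W' where W': "psi eta y (W @ [(GA a, s)] @ t) = W' @ [(GA a, s)] @ T" "cntA W' = cntA W"
    using H2[of "vword eta y" W a s t, OF vword_good r bt] by (auto simp: psi_F T_def)
  have rp: "reduced (W' @ [(GA a, s)] @ T)"
  proof -
    have "reduced (psi eta y (W @ [(GA a, s)] @ t))" by (simp add: psi_def hom_ext_def)
    then show ?thesis using W'(1) by simp
  qed
  have bT: "bonly T" unfolding T_def using bt vword_good[of eta y a] by (auto intro!: bonly_red bonly_finv)
  have "apply_rule eta (y, e) (W @ [(GA a, s)] @ t) = red (W' @ [(GA a, s)] @ (T @ [(y, True)]))"
    using True W' by (simp add: apply_rule_def fmult_def uword_def)
  also have "\<dots> = W' @ [(GA a, s)] @ red (T @ [(y, True)])"
    by (rule red_decomp) (use rp reduced_prefix[of "W' @ [(GA a, s)]" T] bT y True in \<open>auto\<close>)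
  also have "\<dots> = W' @ [(GA a, s)] @ red ((if s then finv (vword eta y a) else []) @ t @ [(y, True)])"
    unfolding T_def by (simp add: red_append_red1)
  finally show ?thesis using W'(2) True by auto
next
  case False
  have rW: "reduced (W @ [(GA a, s)])" using r by (metis append_assoc reduced_prefix)
  have "red ((W @ [(GA a, s)] @ t) @ [(y, False)]) = red (W @ [(GA a, s)] @ (t @ [(y, False)]))" by simp
  also have "\<dots> = W @ [(GA a, s)] @ red (t @ [(y, False)])"
    by (rule red_decomp[OF rW]) (use bt y False in auto)
  finally have e1: "apply_rule eta (y, e) (W @ [(GA a, s)] @ t) = psi_inv eta y (W @ [(GA a, s)] @ red (t @ [(y, False)]))"
    using False by (simp add: apply_rule_def fmult_def uword_def inv_letter_def)
  have r2: "reduced (W @ [(GA a, s)] @ red (t @ [(y, False)]))"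
    by (rule reduced_decomp[OF rW]) (use bt y False in \<open>auto intro: bonly_red\<close>)
  obtain W' where W': "psi_inv eta y (W @ [(GA a, s)] @ red (t @ [(y, False)])) =
      W' @ [(GA a, s)] @ red ((if s then finv (finv (vword eta y a)) else []) @ red (t @ [(y, False)]))"
      "cntA W' = cntA W"
    using H2[of "\<lambda>a. finv (vword eta y a)" W a s "red (t @ [(y, False)])", OF vword_inv_good r2 bonly_red] bt y False by (auto simp: psi_inv_F)
  show ?thesis using e1 W' False by (auto simp: red_append_red2)
qed



abbreviation "B1 \<equiv> ((GB1, False) :: 'a letter)"
abbreviation "B2 \<equiv> ((GB2, False) :: 'a letter)"
abbreviation "B1i \<equiv> ((GB1, True) :: 'a letter)"
abbreviation "B2i \<equiv> ((GB2, True) :: 'a letter)"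

definition V :: "nat \<Rightarrow> nat \<Rightarrow> 'a letter list" where
  "V k D = replicate k B1 @ concat (replicate (D - 2 * k) [B2, B1]) @ replicate k B2"

lemma vword_V: "vword (eta :: 'a::finite gen \<times> 'a \<Rightarrow> nat) y a = V (eta (y, a)) (Dconst TYPE('a))"
  by (simp add: vword_def Let_def V_def)

lemma finv_replicate[simp]: "finv (replicate k x) = replicate k (inv_letter x)"
  by (induction k) (auto simp: replicate_append_same)

lemma finv_concat_replicate: "finv (concat (replicate n p)) = concat (replicate n (finv p))"
proof (induction n)
  case 0 then show ?case by simp
next
  case (Suc n)
  have "concat (replicate n (finv p)) @ finv p = concat (replicate n (finv p) @ [finv p])" by simp
  also have "\<dots> = finv p @ concat (replicate n (finv p))" by (simp only: replicate_append_same) simp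
  finally show ?case using Suc by simp
qed

lemma finv_V: "finv (V k D) = replicate k B2i @ concat (replicate (D - 2 * k) [B1i, B2i]) @ replicate k B1i"
  by (simp add: V_def finv_concat_replicate inv_letter_def)

lemma length_concat_rep2: "length (concat (replicate n [p, q])) = 2 * n"
  by (induction n) auto

lemma length_V: "length (V k D) = 2 * k + 2 * (D - 2 * k)"
  by (simp add: V_def length_concat_rep2)

lemma hd_cc: "0 < n \<Longrightarrow> hd (concat (replicate n [p, q])) = p"
  by (cases n) auto

lemma last_cc: "0 < n \<Longrightarrow> last (concat (replicate n [p, q])) = q"
proof -
  assume "0 < n"
  then obtain m where "n = Suc m" by (cases n) auto
  then have "concat (replicate n [p, q]) = concat (replicate m [p, q]) @ [p, q]"
    by (metis concat.simps(2) concat_append append_Nil2 replicate_Suc replicate_append_same concat.simps(1))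
  then show ?thesis by simp
qed

definition Junc :: "nat \<Rightarrow> 'a letter list \<Rightarrow> 'a letter list \<Rightarrow> bool" where
  "Junc Q P' P \<longleftrightarrow> (\<exists>X Y Z. P' = X @ Y \<and> P = finv Y @ Z \<and> length Y \<le> Q \<and> Z \<noteq> [] \<and> X \<noteq> []
      \<and> hd Z \<noteq> inv_letter (last X))"

lemma Junc_noc: "P' \<noteq> [] \<Longrightarrow> P \<noteq> [] \<Longrightarrow> hd P \<noteq> inv_letter (last P') \<Longrightarrow> Junc Q P' P"
  unfolding Junc_def by (intro exI[of _ P'] exI[of _ "[]"] exI[of _ P]) simp

context
  fixes Q D :: nat
  assumes DQ: "D = 4 * Q"
begin

lemma V_ne: "1 \<le> k \<Longrightarrow> V k D \<noteq> []" by (simp add: V_def)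
lemma hd_V: "1 \<le> k \<Longrightarrow> hd (V k D) = B1" by (cases k) (auto simp: V_def)
lemma last_V: "1 \<le> k \<Longrightarrow> last (V k D) = B2" by (simp add: V_def)

lemma J_pos: "1 \<le> k \<Longrightarrow> 1 \<le> k' \<Longrightarrow> Junc Q (V k' D) (V k D)"
  by (rule Junc_noc) (auto simp: V_ne hd_V last_V inv_letter_def)

lemma J_neg: "1 \<le> k \<Longrightarrow> 1 \<le> k' \<Longrightarrow> Junc Q (finv (V k' D)) (finv (V k D))"
  by (rule Junc_noc) (auto simp: V_ne hd_V last_V inv_letter_def hd_finv last_finv)

lemma J_mix1:
  assumes k: "1 \<le> k" "k \<le> Q" and k': "1 \<le> k'" "k' \<le> Q" and ne: "k \<noteq> k'"
  shows "Junc Q (V k' D :: 'a letter list) (finv (V k D))"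
proof -
  have n: "0 < D - 2 * k" "0 < D - 2 * k'" using k k' DQ by auto
  show ?thesis
  proof (cases "k < k'")
    case True
    define X :: "'a letter list" where "X = replicate k' B1 @ concat (replicate (D - 2 * k') [B2, B1]) @ replicate (k' - k) B2"
    define Y :: "'a letter list" where "Y = (replicate k B2 :: 'a letter list)"
    define Z :: "'a letter list" where "Z = concat (replicate (D - 2 * k) [B1i, B2i]) @ (replicate k B1i :: 'a letter list)"
    have "V k' D = X @ Y" unfolding X_def Y_def V_def using True
      by (simp add: replicate_add[symmetric])
    moreover have "finv (V k D) = finv Y @ Z" unfolding Y_def Z_def finv_V by (simp add: inv_letter_def)
    moreover have "hd Z = B1i" unfolding Z_def using n hd_cc[OF n(1)] by (simp add: hd_append)
    moreover have "last X = B2" unfolding X_def using True by simp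
    ultimately show ?thesis unfolding Junc_def using k n
      by (intro exI[of _ X] exI[of _ Y] exI[of _ Z]) (auto simp: Y_def Z_def X_def inv_letter_def)
  next
    case False
    then have lt: "k' < k" using ne by simp
    define X :: "'a letter list" where "X = replicate k' B1 @ (concat (replicate (D - 2 * k') [B2, B1]) :: 'a letter list)"
    define Y :: "'a letter list" where "Y = (replicate k' B2 :: 'a letter list)"
    define Z :: "'a letter list" where "Z = replicate (k - k') B2i @ concat (replicate (D - 2 * k) [B1i, B2i]) @ (replicate k B1i :: 'a letter list)"
    have "V k' D = X @ Y" unfolding X_def Y_def V_def by simp
    moreover have "finv (V k D) = finv Y @ Z" unfolding Y_def Z_def finv_V using lt
      by (simp add: inv_letter_def replicate_add[symmetric])
    moreover have "hd Z = B2i" unfolding Z_def using lt by (simp add: hd_append)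
    moreover have "last X = B1" unfolding X_def using n last_cc[OF n(2)] by (simp add: last_append)
    moreover have "X \<noteq> []" unfolding X_def using n by (cases "D - 2 * k'") auto
    ultimately show ?thesis unfolding Junc_def using k' lt
      by (intro exI[of _ X] exI[of _ Y] exI[of _ Z]) (auto simp: Y_def Z_def inv_letter_def)
  qed
qed

lemma J_mix2:
  assumes k: "1 \<le> k" "k \<le> Q" and k': "1 \<le> k'" "k' \<le> Q" and ne: "k \<noteq> k'"
  shows "Junc Q (finv (V k' D) :: 'a letter list) (V k D)"
proof -
  have n: "0 < D - 2 * k" "0 < D - 2 * k'" using k k' DQ by auto
  show ?thesis
  proof (cases "k < k'")
    case True
    define X :: "'a letter list" where "X = replicate k' B2i @ concat (replicate (D - 2 * k') [B1i, B2i]) @ (replicate (k' - k) B1i :: 'a letter list)"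
    define Y :: "'a letter list" where "Y = (replicate k B1i :: 'a letter list)"
    define Z :: "'a letter list" where "Z = concat (replicate (D - 2 * k) [B2, B1]) @ (replicate k B2 :: 'a letter list)"
    have "finv (V k' D) = X @ Y" unfolding X_def Y_def finv_V using True
      by (simp add: replicate_add[symmetric])
    moreover have "V k D = finv Y @ Z" unfolding Y_def Z_def V_def by (simp add: inv_letter_def)
    moreover have "hd Z = B2" unfolding Z_def using n hd_cc[OF n(1)] by (simp add: hd_append)
    moreover have "last X = B1i" unfolding X_def using True by simp
    ultimately show ?thesis unfolding Junc_def using k n
      by (intro exI[of _ X] exI[of _ Y] exI[of _ Z]) (auto simp: Y_def Z_def X_def inv_letter_def)
  next
    case False
    then have lt: "k' < k" using ne by simp
    define X :: "'a letter list" where "X = replicate k' B2i @ (concat (replicate (D - 2 * k') [B1i, B2i]) :: 'a letter list)"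
    define Y :: "'a letter list" where "Y = (replicate k' B1i :: 'a letter list)"
    define Z :: "'a letter list" where "Z = replicate (k - k') B1 @ concat (replicate (D - 2 * k) [B2, B1]) @ (replicate k B2 :: 'a letter list)"
    have "finv (V k' D) = X @ Y" unfolding X_def Y_def finv_V by simp
    moreover have "V k D = finv Y @ Z" unfolding Y_def Z_def V_def using lt
      by (simp add: inv_letter_def replicate_add[symmetric])
    moreover have "hd Z = B1" unfolding Z_def using lt by (simp add: hd_append)
    moreover have "last X = B2i" unfolding X_def using n last_cc[OF n(2)] by (simp add: last_append)
    moreover have "X \<noteq> []" unfolding X_def using n by (cases "D - 2 * k'") auto
    ultimately show ?thesis unfolding Junc_def using k' lt
      by (intro exI[of _ X] exI[of _ Y] exI[of _ Z]) (auto simp: Y_def Z_def inv_letter_def)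
  qed
qed

definition InvL :: "'a letter list \<Rightarrow> 'a letter list \<Rightarrow> nat \<Rightarrow> bool" where
  "InvL P Lr m \<longleftrightarrow> (\<exists>l s. Lr = take l P @ s \<and> length P \<le> l + Q \<and> l \<le> length P \<and> reduced Lr \<and> m * D \<le> length Lr)"

lemma InvL_base: "reduced P \<Longrightarrow> D \<le> length P \<Longrightarrow> InvL P (red P) 1"
  unfolding InvL_def by (intro exI[of _ "length P"] exI[of _ "[]"]) (simp add: red_reduced)

lemma InvL_step:
  assumes I: "InvL P Lr m" and J: "Junc Q P' P" and lP: "2 * Q < length P"
    and lP': "D + 2 * Q \<le> length P'" and rP': "reduced P'"
  shows "InvL P' (red (P' @ Lr)) (Suc m)"
proof -
  obtain X Y Z where J1: "P' = X @ Y" "P = finv Y @ Z" "length Y \<le> Q" "Z \<noteq> []" "X \<noteq> []"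
      "hd Z \<noteq> inv_letter (last X)"
    using J unfolding Junc_def by blast
  obtain l s where I1: "Lr = take l P @ s" "length P \<le> l + Q" "l \<le> length P" "reduced Lr" "m * D \<le> length Lr"
    using I unfolding InvL_def by blast
  define Z0 where "Z0 = take (l - length Y) Z"
  have lY: "length Y < l" using I1(2) lP J1(3) by linarith
  have tk: "take l P = finv Y @ Z0" unfolding Z0_def J1(2) using lY by (simp add: take_append)
  have Z0ne: "Z0 \<noteq> []" unfolding Z0_def using lY J1(4) by simp
  have hZ0: "hd Z0 = hd Z" unfolding Z0_def using lY J1(4) by (simp add: hd_take)
  have Lr: "Lr = finv Y @ Z0 @ s" using I1(1) tk by simp
  have rX: "reduced X" using rP' J1(1) reduced_prefix by blast
  have rZs: "reduced (Z0 @ s)" using I1(4) Lr reduced_suffix by metis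
  have rXZ: "reduced (X @ Z0 @ s)"
    using rX rZs J1(5,6) Z0ne hZ0 by (subst reduced_append) (simp add: hd_append)
  have "red (P' @ Lr) = red (X @ (Y @ finv Y @ (Z0 @ s)))" using J1(1) Lr by simp
  also have "\<dots> = red (X @ red (Y @ finv Y @ (Z0 @ s)))" by (simp only: red_append_red2)
  also have "\<dots> = red (X @ red (Z0 @ s))" by (simp only: red_cancel)
  also have "\<dots> = X @ Z0 @ s" by (simp only: red_append_red2) (simp add: red_reduced rXZ)
  finally have e: "red (P' @ Lr) = X @ Z0 @ s" .
  have len: "length (X @ Z0 @ s) + 2 * length Y = length P' + length Lr"
    using J1(1) Lr by simp
  show ?thesis unfolding InvL_def e
    apply (intro exI[of _ "length X"] exI[of _ "Z0 @ s"])
    using J1 rXZ len lP' I1(5) by auto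
qed

lemma InvL_len: "InvL P Lr m \<Longrightarrow> 1 \<le> m \<Longrightarrow> 1 \<le> Q \<Longrightarrow> m < length Lr"
proof -
  assume "InvL P Lr m" "1 \<le> m" "1 \<le> Q"
  then have "m * D \<le> length Lr" "2 \<le> D" using DQ unfolding InvL_def by auto
  moreover have "m < m * D" using \<open>2 \<le> D\<close> \<open>1 \<le> m\<close> by (simp add: less_le_trans[of m "m * 2"])
  ultimately show ?thesis by linarith
qed

end



lemma rule_B_cnt:
  assumes y: "\<not> isA (y, e)" and r: "reduced w"
  shows "cntA (apply_rule eta (y, e) w) = cntA w"
proof (cases "bonly w")
  case True
  have yb: "bonly [(y, e)]" "bonly [(y, False)]" using y by (auto simp: isA_def)
  show ?thesis
  proof (cases e)
    case e: True
    have "apply_rule eta (y, e) w = red (w @ [(y, True)])"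
      using e H1[of "vword eta y", OF vword_good r True] by (simp add: apply_rule_def fmult_def uword_def psi_F)
    moreover have "bonly (red (w @ [(y, True)]))" using True yb e by (auto intro!: bonly_red)
    ultimately show ?thesis using True by (simp add: cntA_bonly)
  next
    case e: False
    have "apply_rule eta (y, e) w = psi_inv eta y (red (w @ [(y, False)]))"
      using e by (simp add: apply_rule_def fmult_def uword_def inv_letter_def)
    moreover have b2: "bonly (red (w @ [(y, False)]))" using True yb by (auto intro!: bonly_red)
    moreover have "psi_inv eta y (red (w @ [(y, False)])) = red (w @ [(y, False)])"
      using H1[of "\<lambda>a. finv (vword eta y a)", OF vword_inv_good reduced_red b2] by (simp add: psi_inv_F)
    ultimately show ?thesis using True by (simp add: cntA_bonly)
  qed
next
  case False
  then obtain W x t where d: "w = W @ [x] @ t" "isA x" "bonly t" using decomp_exists by blast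
  then obtain a s where x: "x = (GA a, s)" by (cases x; rename_tac g e; case_tac g) auto
  obtain W' where W': "apply_rule eta (y, e) w =
     W' @ [(GA a, s)] @ red ((if s then (if e then finv (vword eta y a) else vword eta y a) else []) @ t @ [(y, e)])"
     "cntA W' = cntA W"
    using rule_B[OF y, of W a s t eta] r d x by auto
  have "bonly (red ((if s then (if e then finv (vword eta y a) else vword eta y a) else []) @ t @ [(y, e)]))"
    using d y vword_good[of eta y a] by (auto intro!: bonly_red bonly_finv simp: isA_def)
  then show ?thesis using W' d x by (simp add: cntA_bonly cntA_Cons)
qed

definition pieceOf :: "('a::finite gen \<times> 'a \<Rightarrow> nat) \<Rightarrow> 'a \<Rightarrow> 'a letter \<Rightarrow> 'a letter list" where
  "pieceOf eta c h = (if snd h then finv (vword eta (fst h) c) else vword eta (fst h) c)"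

lemma notA_cases: "\<not> isA h \<Longrightarrow> fst h = GB1 \<or> fst h = GB2"
  by (cases h; rename_tac g e; case_tac g) auto

context
  fixes eta :: "'a::finite gen \<times> 'a \<Rightarrow> nat" and Q :: nat
  assumes bij: "bij_betw eta UNIV {1 .. Dconst TYPE('a) div 4}"
    and Qdef: "Q = Dconst TYPE('a) div 4"
begin

lemma DQ: "Dconst TYPE('a) = 4 * Q" "1 \<le> Q"
proof -
  have "0 < card (UNIV :: 'a set)" by (simp add: finite_UNIV_card_ge_0)
  then show "Dconst TYPE('a) = 4 * Q" "1 \<le> Q" unfolding Qdef Dconst_def by auto
qed

lemma eta_range: "1 \<le> eta p \<and> eta p \<le> Q"
  using bij unfolding bij_betw_def Qdef by auto

lemma eta_inj: "eta p = eta p' \<Longrightarrow> p = p'"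
  using bij unfolding bij_betw_def inj_on_def by (metis UNIV_I)

lemma piece_good: "reduced (pieceOf eta c h) \<and> bonly (pieceOf eta c h)"
  unfolding pieceOf_def using vword_good[of eta "fst h" c] vword_inv_good[of eta "fst h" c] by auto

lemma piece_len: "Dconst TYPE('a) + 2 * Q \<le> length (pieceOf eta c h) \<and> 2 * Q < length (pieceOf eta c h)"
proof -
  have "length (pieceOf eta c h) = length (V (eta (fst h, c)) (Dconst TYPE('a)) :: 'a letter list)"
    unfolding pieceOf_def by (simp add: vword_V)
  also have "\<dots> = 2 * eta (fst h, c) + 2 * (Dconst TYPE('a) - 2 * eta (fst h, c))" by (rule length_V)
  finally show ?thesis using eta_range[of "(fst h, c)"] DQ by auto
qed

lemma piece_junc:
  assumes h: "\<not> isA h" and h': "\<not> isA h'" and ne: "h' \<noteq> inv_letter h"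
  shows "Junc Q (pieceOf eta c h') (pieceOf eta c h)"
proof -
  obtain y e y' e' where hh: "h = (y, e)" "h' = (y', e')" by (cases h, cases h') auto
  define k where "k = eta (y, c)"
  define k' where "k' = eta (y', c)"
  have kr: "1 \<le> k" "k \<le> Q" "1 \<le> k'" "k' \<le> Q" unfolding k_def k'_def using eta_range by auto
  have P: "pieceOf eta c h = (if e then finv (V k (Dconst TYPE('a))) else V k (Dconst TYPE('a)))"
    unfolding pieceOf_def hh k_def by (simp add: vword_V)
  have P': "pieceOf eta c h' = (if e' then finv (V k' (Dconst TYPE('a))) else V k' (Dconst TYPE('a)))"
    unfolding pieceOf_def hh k'_def by (simp add: vword_V)
  note DQ1 = DQ(1)
  show ?thesis
  proof (cases "e = e'")
    case True
    then show ?thesis using P P' kr J_pos[OF DQ1] J_neg[OF DQ1] by (cases e) auto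
  next
    case False
    then have "y \<noteq> y'" using ne hh by (auto simp: inv_letter_def)
    then have kk: "k \<noteq> k'" unfolding k_def k'_def using eta_inj by blast
    show ?thesis using False P P' J_mix1[OF DQ1 kr kk] J_mix2[OF DQ1 kr kk] by (cases e) auto
  qed
qed

end



lemma last_decomp_eq:
  assumes "W @ [(GA c, f)] = W1 @ [x] @ T" "bonly T"
  shows "T = [] \<and> x = (GA c, f)"
proof (cases "T = []")
  case True then show ?thesis using assms by simp
next
  case False
  then have "last (W1 @ [x] @ T) = last T" by simp
  then have "\<not> isA (last (W @ [(GA c, f)]))" using assms isA_last[OF assms(2) False] by simp
  then show ?thesis by simp
qed

theorem lemma5p8:
  fixes eta :: "'a::finite gen \<times> 'a \<Rightarrow> nat"
    and ws :: "'a letter list list" and hs :: "('a gen \<times> bool) list"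
  assumes "bij_betw eta UNIV {1 .. Dconst TYPE('a) div 4}"
    and "is_computation eta ws hs"
    and "reduced_history hs"
    and "1 \<le> length hs"
    and "cntA (ws ! 0) < cntA (ws ! 1)"
  shows "\<forall>i. 1 \<le> i \<and> i \<le> length hs \<longrightarrow> cntA (ws ! (i - 1)) \<le> cntA (ws ! i)"
proof (rule ccontr)
  note bij = assms(1)
  define Q where "Q = Dconst TYPE('a) div 4"
  define D where "D = Dconst TYPE('a)"
  have DQ: "D = 4 * Q" "1 \<le> Q" using DQ[OF bij Q_def] D_def by auto
  define c where "c i = cntA (ws ! i)" for i
  have step: "ws ! Suc i = apply_rule eta (hs ! i) (ws ! i)" if "i < length hs" for i
    using assms(2) that unfolding is_computation_def by blast
  have red_ws: "reduced (ws ! i)" if "i \<le> length hs" for i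
  proof (cases i)
    case 0 then show ?thesis using assms(2) unfolding is_computation_def by blast
  next
    case (Suc i') then show ?thesis using step[of i'] that reduced_apply_rule[of eta "hs ! i'"] by auto
  qed
  have rh: "hs ! Suc i \<noteq> inv_letter (hs ! i)" if "Suc i < length hs" for i
    using assms(3) that unfolding reduced_history_def inv_letter_def by blast
  have cnt_step: "c (Suc i) = c i + 1 \<or> Suc (c (Suc i)) = c i" if A: "i < length hs" and B: "isA (hs ! i)" for i
  proof -
    obtain g e where he: "hs ! i = (g, e)" by (cases "hs ! i")
    then obtain a where g: "g = GA a" using B by (cases g) auto
    have "i \<le> length hs" using A by simp
    from rule_A[OF red_ws[OF this], of eta a e]
    show ?thesis unfolding c_def using step[OF A] he g by (auto simp: cntA_Cons)
  qed
  have cnt_B: "c (Suc i) = c i" if A: "i < length hs" and B: "\<not> isA (hs ! i)" for i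
  proof -
    obtain g e where he: "hs ! i = (g, e)" by (cases "hs ! i")
    show ?thesis unfolding c_def using step[OF A] he rule_B_cnt[of g e "ws ! i" eta] A B red_ws[of i] by auto
  qed
  assume "\<not> (\<forall>i. 1 \<le> i \<and> i \<le> length hs \<longrightarrow> cntA (ws ! (i - 1)) \<le> cntA (ws ! i))"
  then have "\<exists>i. 1 \<le> i \<and> i \<le> length hs \<and> c i < c (i - 1)" unfolding c_def by (meson not_le)
  then obtain i1 where i1: "1 \<le> i1 \<and> i1 \<le> length hs \<and> c i1 < c (i1 - 1)" by blast
  define P where "P i \<longleftrightarrow> 1 \<le> i \<and> i \<le> length hs \<and> c i < c (i - 1)" for i
  define j where "j = (LEAST i. P i)"
  have "P i1" using i1 unfolding P_def by blast
  then have Pj: "P j" unfolding j_def by (rule LeastI)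
  have minj: "\<not> P i" if "i < j" for i using that unfolding j_def by (rule not_less_Least)
  have c01: "c 0 < c 1" using assms(5) c_def by simp
  have j1: "1 \<le> j" "c j < c (j - 1)" using Pj unfolding P_def by auto
  have j2: "2 \<le> j"
  proof (rule ccontr)
    assume "\<not> 2 \<le> j"
    then have "j = 1" using j1 by simp
    then show False using j1 c01 by simp
  qed
  define S where "S = {i. 1 \<le> i \<and> i < j \<and> c (i - 1) < c i}"
  have S1: "1 \<in> S" unfolding S_def using j2 c01 by auto
  have "S \<subseteq> {..<j}" unfolding S_def by auto
  then have Sfin: "finite S" using finite_subset by blast
  define i0 where "i0 = Max S"
  have i0S: "i0 \<in> S" unfolding i0_def using S1 Sfin Max_in by blast
  have i0max: "i \<le> i0" if "i \<in> S" for i unfolding i0_def using Sfin that by simp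
  have i0: "1 \<le> i0" "i0 < j" "c (i0 - 1) < c i0" using i0S unfolding S_def by auto
  have jl: "j \<le> length hs" using Pj P_def by simp
  have ceq: "c (i - 1) = c i" if "i0 < i" "i < j" for i
  proof -
    have "\<not> P i" using minj that(2) .
    then have "c (i - 1) \<le> c i" unfolding P_def using that i0 jl by auto
    moreover have "i \<notin> S" using i0max that(1) by fastforce
    then have "\<not> c (i - 1) < c i" unfolding S_def using that i0 by auto
    ultimately show ?thesis by simp
  qed
  have isB: "\<not> isA (hs ! (i - 1))" if "i0 < i" "i < j" for i
  proof
    assume "isA (hs ! (i - 1))"
    then have "c i = c (i - 1) + 1 \<or> Suc (c i) = c (i - 1)"
      using cnt_step[of "i - 1"] that i0 jl by (cases i) auto
    then show False using ceq[OF that] by simp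
  qed
  obtain c0 s0 where h0: "hs ! (i0 - 1) = (GA c0, s0)"
  proof -
    have "isA (hs ! (i0 - 1))"
    proof (rule ccontr)
      assume "\<not> isA (hs ! (i0 - 1))"
      then have "c (Suc (i0 - 1)) = c (i0 - 1)" using cnt_B[of "i0 - 1"] i0 jl by auto
      then show False using i0 by simp
    qed
    then show ?thesis using that by (cases "hs ! (i0 - 1)"; rename_tac g e; case_tac g) auto
  qed
  have wsi0: "ws ! i0 = apply_rule eta (GA c0, s0) (ws ! (i0 - 1))"
    using step[of "i0 - 1"] h0 i0 jl by auto
  obtain W0 where W0: "ws ! i0 = W0 @ [(GA c0, s0)]"
  proof -
    have "i0 - 1 \<le> length hs" using i0 jl by simp
    from rule_A[OF red_ws[OF this], of eta c0 s0]
    consider (a) "\<exists>W'. apply_rule eta (GA c0, s0) (ws ! (i0 - 1)) = W' @ [(GA c0, s0)] \<and> cntA W' = cntA (ws ! (i0 - 1))"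
      | (b) "\<exists>W. ws ! (i0 - 1) = W @ [(GA c0, \<not> s0)] \<and> cntA (apply_rule eta (GA c0, s0) (ws ! (i0 - 1))) = cntA W"
      by auto
    then show ?thesis
    proof cases
      case a then show ?thesis using that wsi0 by auto
    next
      case b
      then obtain W where "ws ! (i0 - 1) = W @ [(GA c0, \<not> s0)]" "c i0 = cntA W" using wsi0 c_def by auto
      then have "c (i0 - 1) = c i0 + 1" unfolding c_def by simp
      then show ?thesis using i0 by simp
    qed
  qed
  define x where "x = (GA c0, s0)"
  define Inv where "Inv k \<longleftrightarrow> (\<exists>W L R. ws ! k = W @ [x] @ red (L @ R) \<and> reduced R \<and> bonly L \<and> bonly R
      \<and> length R = k - i0 \<and> (i0 < k \<longrightarrow> R \<noteq> [] \<and> last R = hs ! (k - 1)) \<and> (\<not> s0 \<longrightarrow> L = [])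
      \<and> (s0 \<and> i0 < k \<longrightarrow> InvL Q D (pieceOf eta c0 (hs ! (k - 1))) (red L) (k - i0)) \<and> (k = i0 \<longrightarrow> L = []))" for k
  have Inv_all: "i0 + d < j \<longrightarrow> Inv (i0 + d)" for d
  proof (induction d)
    case 0
    show ?case unfolding Inv_def using W0 x_def
      by (intro impI exI[of _ W0] exI[of _ "[]"] exI[of _ "[]"]) simp
  next
    case (Suc d)
    show ?case
    proof
      assume lt: "i0 + Suc d < j"
      define k where "k = i0 + d"
      have kl: "k < length hs" using lt jl k_def by simp
      have "Inv k" using Suc lt k_def by simp
      then obtain W L R where I: "ws ! k = W @ [x] @ red (L @ R)" "reduced R" "bonly L" "bonly R"
        "length R = k - i0" "i0 < k \<longrightarrow> R \<noteq> [] \<and> last R = hs ! (k - 1)" "\<not> s0 \<longrightarrow> L = []"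
        "s0 \<and> i0 < k \<longrightarrow> InvL Q D (pieceOf eta c0 (hs ! (k - 1))) (red L) (k - i0)" "k = i0 \<longrightarrow> L = []"
        unfolding Inv_def by blast
      define h where "h = hs ! k"
      have hB: "\<not> isA h" unfolding h_def using isB[of "Suc k"] lt k_def by simp
      obtain y e where he: "h = (y, e)" by (cases h)
      define pc where "pc = (if s0 then (if e then finv (vword eta y c0) else vword eta y c0) else [])"
      have pc2: "pc = (if s0 then pieceOf eta c0 h else [])" unfolding pc_def pieceOf_def he by simp
      have bT: "bonly (red (L @ R))" using I(3,4) by (auto intro: bonly_red)
      have rk: "reduced (W @ [(GA c0, s0)] @ red (L @ R))" using red_ws[of k] kl I(1) x_def by simp
      obtain W' where W': "ws ! Suc k = W' @ [x] @ red (pc @ red (L @ R) @ [(y, e)])"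
        using rule_B[OF _ rk bT, of y e eta] hB he step[OF kl] h_def I(1) x_def pc_def by auto
      have e1: "red (pc @ red (L @ R) @ [(y, e)]) = red ((pc @ L) @ (R @ [h]))"
        using red_mid[of pc "L @ R" "[(y, e)]"] he by simp
      have rR': "reduced (R @ [h])"
      proof (cases "R = []")
        case True then show ?thesis by simp
      next
        case False
        then have "0 < length R" by simp
        then have "i0 < k" using I(5) by simp
        then have "last R = hs ! (k - 1)" using I(6) by simp
        moreover have "hs ! k \<noteq> inv_letter (hs ! (k - 1))" using rh[of "k - 1"] kl \<open>i0 < k\<close> by simp
        ultimately show ?thesis using I(2) False by (subst reduced_append) (simp add: h_def)
      qed
      have bL': "bonly (pc @ L)" using I(3) pc2 piece_good[OF bij Q_def] by auto
      have Inv3: "InvL Q D (pieceOf eta c0 h) (red (pc @ L)) (Suc k - i0)" if s0: s0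
      proof (cases "i0 < k")
        case False
        then have "k = i0" using k_def by simp
        then have "L = []" using I(9) by simp
        moreover have "D \<le> length (pieceOf eta c0 h)" using piece_len[OF bij Q_def, of c0 h] D_def by simp
        then have "InvL Q D (pieceOf eta c0 h) (red (pieceOf eta c0 h)) 1"
          by (rule InvL_base[OF DQ(1) conjunct1[OF piece_good[OF bij Q_def]]])
        ultimately show ?thesis using s0 pc2 \<open>k = i0\<close> by simp
      next
        case True
        have h1: "\<not> isA (hs ! (k - 1))" using I(6) I(4) True isA_last by fastforce
        have hne: "h \<noteq> inv_letter (hs ! (k - 1))" using rh[of "k - 1"] kl True h_def by simp
        have "red (pc @ L) = red (pieceOf eta c0 h @ red L)" using pc2 s0 by (simp add: red_append_red2)
        moreover have "Suc k - i0 = Suc (k - i0)" using True by simp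
        ultimately show ?thesis
          using InvL_step[OF DQ(1), of "pieceOf eta c0 (hs ! (k - 1))" "red L" "k - i0" "pieceOf eta c0 h"]
            I(8) s0 True piece_junc[OF bij Q_def h1 hB hne] piece_len[OF bij Q_def] piece_good[OF bij Q_def] D_def
          by auto
      qed
      have ik: "i0 + Suc d = Suc k" using k_def by simp
      have c1: "ws ! Suc k = W' @ [x] @ red ((pc @ L) @ (R @ [h]))" using W' e1 by simp
      have c2: "bonly (R @ [h])" using I(4) hB by simp
      have c3: "length (R @ [h]) = Suc k - i0" using I(5) k_def by simp
      have c4: "R @ [h] \<noteq> [] \<and> last (R @ [h]) = hs ! (Suc k - 1)" using h_def by simp
      have c5: "\<not> s0 \<longrightarrow> pc @ L = []" using pc2 I(7) by simp
      have c6: "s0 \<and> i0 < Suc k \<longrightarrow> InvL Q D (pieceOf eta c0 (hs ! (Suc k - 1))) (red (pc @ L)) (Suc k - i0)"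
        using Inv3 h_def by simp
      show "Inv (i0 + Suc d)" unfolding Inv_def ik
        by (intro exI[of _ W'] exI[of _ "pc @ L"] exI[of _ "R @ [h]"] conjI impI)
          (use c1 rR' bL' c2 c3 c4 c5 c6 k_def in simp_all)
    qed
  qed
  define k where "k = j - 1"
  have kj: "Suc k = j" "i0 \<le> k" using j2 i0 k_def by auto
  have kl: "k < length hs" using kj jl by simp
  obtain W L R where I: "ws ! k = W @ [x] @ red (L @ R)" "reduced R" "bonly L" "bonly R"
    "length R = k - i0" "i0 < k \<longrightarrow> R \<noteq> [] \<and> last R = hs ! (k - 1)" "\<not> s0 \<longrightarrow> L = []"
    "s0 \<and> i0 < k \<longrightarrow> InvL Q D (pieceOf eta c0 (hs ! (k - 1))) (red L) (k - i0)" "k = i0 \<longrightarrow> L = []"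
    using Inv_all[of "k - i0"] kj unfolding Inv_def by (simp only: le_add_diff_inverse) blast
  have dec: "c j < c k" using Pj kj unfolding P_def by auto
  obtain g e where he: "hs ! k = (g, e)" by (cases "hs ! k")
  have gA: "isA (hs ! k)" using cnt_B[OF kl] dec kj by auto
  then obtain a where ga: "g = GA a" using he by (cases g) auto
  have "k \<le> length hs" using kl by simp
  from rule_A[OF red_ws[OF this], of eta a e]
  consider (a) "\<exists>W'. apply_rule eta (GA a, e) (ws ! k) = W' @ [(GA a, e)] \<and> cntA W' = cntA (ws ! k)"
    | (b) "\<exists>W. ws ! k = W @ [(GA a, \<not> e)] \<and> cntA (apply_rule eta (GA a, e) (ws ! k)) = cntA W"
    by auto
  then show False
  proof cases
    case a
    then have "c j = c k + 1" using step[OF kl] he ga kj unfolding c_def by auto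
    then show False using dec by simp
  next
    case b
    then obtain W2 where W2: "ws ! k = W2 @ [(GA a, \<not> e)]" by blast
    have bT: "bonly (red (L @ R))" using I(3,4) by (auto intro: bonly_red)
    have T0: "red (L @ R) = []" and xa: "x = (GA a, \<not> e)"
      using last_decomp_eq[OF _ bT, of W2 a "\<not> e" W x] W2 I(1) by auto
    show False
    proof (cases "i0 < k")
      case False
      then have "k = i0" using kj by simp
      then have "hs ! k = inv_letter (hs ! (k - 1))" using h0 he ga xa x_def by (simp add: inv_letter_def)
      then show False using rh[of "k - 1"] kl i0 \<open>k = i0\<close> by simp
    next
      case True
      then have Rne: "R \<noteq> []" using I(6) by simp
      show False
      proof (cases s0)
        case False
        then have "red R = []" using T0 I(7) by simp
        then show False using Rne I(2) by (simp add: red_reduced)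
      next
        case True
        have "InvL Q D (pieceOf eta c0 (hs ! (k - 1))) (red L) (k - i0)" using I(8) True \<open>i0 < k\<close> by simp
        moreover have "1 \<le> k - i0" using \<open>i0 < k\<close> by simp
        ultimately have "k - i0 < length (red L)" using InvL_len[OF DQ(1)] DQ(2) by blast
        moreover have "red L = red (finv R)" using red_eq_Nil_inv[OF T0] .
        then have "length (red L) \<le> length R" using length_red[of "finv R"] by simp
        ultimately show False using I(5) by simp
      qed
    qed
  qed
qed


end
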